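(* Let $n\in\mathbb{N}$ and $0\le\alpha<1$. Then $$R_{\mathcal{S}^*_{Ne,n}}(\mathcal{CS}^*_n(\alpha))=\left(\frac{2}{3(1+n-\alpha)+\sqrt{9(1+n-\alpha)^2+4(4-3\alpha)}}\right)^{1/n},$$ and this radius is sharp, i.e. it is the exact value of the radius.
   Context: $\mathbb{D}=\{|z|<1\}$, $\mathbb{D}_r=\{|z|<r\}$. For $n\in\mathbb{N}$, $\mathcal{A}_n$ is the class of analytic functions on $\mathbb{D}$ of the form $f(z)=z+\sum_{k\ge n+1}a_kz^k$; for such $f$ let $\mathcal{Q}_f(z)=zf'(z)/f(z)$. $\mathcal{P}_n$ is the class of analytic $p(z)=1+\sum_{k\ge n}p_kz^k$ on $\mathbb{D}$ with $\mathrm{Re}\,p(z)>0$. $\mathcal{S}^*_n(\alpha)=\{g\in\mathcal{A}_n:\mathrm{Re}\,\mathcal{Q}_g(z)>\alpha,\ z\in\mathbb{D}\}$. The close-to-starlike class of type $\alpha$ is $\mathcal{CS}^*_n(\alpha)=\{f\in\mathcal{A}_n:\ f/g\in\mathcal{P}_n \text{ for some } g\in\mathcal{S}^*_n(\alpha)\}$. Let $\varphi_{Ne}(z)=1+z-z^3/3$ (univalent on $\mathbb{D}$), $\Omega_{Ne}=\varphi_{Ne}(\mathbb{D})$, $\mathcal{S}^*_{Ne}$ the set of $f$ ($f(0)=0,f'(0)=1$) with $\mathcal{Q}_f\prec\varphi_{Ne}$ (i.e. $\mathcal{Q}_f=\varphi_{Ne}\circ w$, $w:\mathbb{D}\to\mathbb{D}$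 analytic, $w(0)=0$), $\mathcal{S}^*_{Ne,n}=\mathcal{S}^*_{Ne}\cap\mathcal{A}_n$. For $\mathcal{G}\subset\mathcal{A}_n$, $R_{\mathcal{S}^*_{Ne,n}}(\mathcal{G})$ is the largest $\rho\in(0,1]$ such that $\mathcal{Q}_f(\mathbb{D}_\rho)\subseteq\Omega_{Ne}$ for all $f\in\mathcal{G}$. *)

theory Defs
  imports "HOL-Analysis.Analysis"
begin

text \<open>Class A_n: f analytic on the unit disc, f(z) = z + sum_{k >= n+1} a_k z^k,
  i.e. f 0 = 0, f'(0) = 1 and the Taylor coefficients of order 2..n vanish.\<close>
definition A_cls :: "nat \<Rightarrow> (complex \<Rightarrow> complex) set" where
  "A_cls n = {f. f holomorphic_on ball 0 1 \<and> f 0 = 0 \<and> deriv f 0 = 1 \<and>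
                 (\<forall>k. 2 \<le> k \<and> k \<le> n \<longrightarrow> (deriv ^^ k) f 0 = 0)}"

definition Qf :: "(complex \<Rightarrow> complex) \<Rightarrow> complex \<Rightarrow> complex" where
  "Qf f z = (if z = 0 then 1 else z * deriv f z / f z)"

text \<open>Class P_n: p(z) = 1 + sum_{k >= n} p_k z^k with positive real part.\<close>
definition P_cls :: "nat \<Rightarrow> (complex \<Rightarrow> complex) set" where
  "P_cls n = {p. p holomorphic_on ball 0 1 \<and> p 0 = 1 \<and>
                 (\<forall>k. 1 \<le> k \<and> k < n \<longrightarrow> (deriv ^^ k) p 0 = 0) \<and>
                 (\<forall>z\<in>ball 0 1. Re (p z) > 0)}"

text \<open>Starlike functions of order alpha in A_n (nonvanishing off the origin, so that Q_g is defined).\<close>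
definition Sstar_cls :: "nat \<Rightarrow> real \<Rightarrow> (complex \<Rightarrow> complex) set" where
  "Sstar_cls n \<alpha> = {g \<in> A_cls n. (\<forall>z\<in>ball 0 1. z \<noteq> 0 \<longrightarrow> g z \<noteq> 0) \<and>
                        (\<forall>z\<in>ball 0 1. Re (Qf g z) > \<alpha>)}"

definition CSstar_cls :: "nat \<Rightarrow> real \<Rightarrow> (complex \<Rightarrow> complex) set" where
  "CSstar_cls n \<alpha> = {f \<in> A_cls n. \<exists>g\<in>Sstar_cls n \<alpha>.
                         (\<lambda>z. if z = 0 then 1 else f z / g z) \<in> P_cls n}"

definition phi_Ne :: "complex \<Rightarrow> complex" where
  "phi_Ne z = 1 + z - z ^ 3 / 3"

definition Omega_Ne :: "complex set" where
  "Omega_Ne = phi_Ne ` ball 0 1"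

definition radius_Ne :: "(complex \<Rightarrow> complex) set \<Rightarrow> real" where
  "radius_Ne G = (GREATEST \<rho>. 0 < \<rho> \<and> \<rho> \<le> 1 \<and>
                     (\<forall>f\<in>G. Qf f ` ball 0 \<rho> \<subseteq> Omega_Ne))"

end

theory Submission
  imports Defs "HOL-Complex_Analysis.Complex_Analysis"
begin

lemma disk_in_Omega:
  fixes w :: complex
  assumes "cmod (w - 1) < 2/3"
  shows "w \<in> Omega_Ne"
proof -
  define c where "c = w - 1"
  define \<rho> where "\<rho> = 1 - sqrt (2/3 - cmod c)"
  have c23: "cmod c < 2/3" using assms c_def by simp
  have sq0: "0 < sqrt (2/3 - cmod c)" using c23 by simp
  have sq1: "sqrt (2/3 - cmod c) < 1"
  proof -
    have "2/3 - cmod c < 1" using norm_ge_zero[of c] by linarith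
    then show ?thesis by simp
  qed
  have r0: "0 < \<rho>" "\<rho> < 1" using sq0 sq1 \<rho>_def by auto
  have hkey: "cmod c \<le> \<rho> - \<rho>^3/3"
  proof -
    have e: "(1-\<rho>)^2 = 2/3 - cmod c" using \<rho>_def c23 by simp
    have "2/3 - (\<rho> - \<rho>^3/3) = (1-\<rho>)^2 * (2+\<rho>)/3"
      by (simp add: power2_eq_square power3_eq_cube algebra_simps)
    also have "\<dots> \<le> (1-\<rho>)^2" using r0 by (simp add: divide_le_eq mult_left_le)
    finally show ?thesis using e by simp
  qed
  define T where "T z = c + z^3/3" for z :: complex
  have Tmap: "T ` cball 0 \<rho> \<subseteq> cball 0 \<rho>"
  proof
    fix y assume "y \<in> T ` cball 0 \<rho>"
    then obtain z where z: "cmod z \<le> \<rho>" "y = T z" by auto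
    have "cmod (z^3) \<le> \<rho>^3" using z r0 by (simp add: norm_power power_mono)
    have "cmod y \<le> cmod c + cmod (z^3/3)" using z T_def norm_triangle_ineq[of c "z^3/3"] by simp
    then have "cmod y \<le> cmod c + \<rho>^3/3" using \<open>cmod (z^3) \<le> \<rho>^3\<close> by (simp add: norm_divide)
    then show "y \<in> cball 0 \<rho>" using hkey by simp
  qed
  have lip: "dist (T x) (T y) \<le> \<rho>^2 * dist x y" if "x \<in> cball 0 \<rho>" "y \<in> cball 0 \<rho>" for x y
  proof -
    have xs: "cmod x \<le> \<rho>" "cmod y \<le> \<rho>" using that by auto
    have e: "T x - T y = (x - y) * (x^2 + x*y + y^2) / 3"
      by (simp add: T_def power2_eq_square power3_eq_cube algebra_simps)
    moreover have "cmod (x^2 + x*y + y^2) \<le> 3 * \<rho>^2"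
    proof -
      have "cmod (x^2 + x*y + y^2) \<le> cmod x ^2 + cmod x * cmod y + cmod y^2"
        by (smt (verit) norm_mult norm_power norm_triangle_ineq)
      also have "\<dots> \<le> \<rho>^2 + \<rho>*\<rho> + \<rho>^2"
        using xs r0 by (intro add_mono mult_mono power_mono) auto
      finally show ?thesis by (simp add: power2_eq_square)
    qed
    then have "cmod (x-y) * cmod (x^2 + x*y + y^2) \<le> cmod (x-y) * (3*\<rho>^2)"
      by (simp add: mult_left_mono)
    moreover have "cmod (T x - T y) = cmod (x-y) * cmod (x^2 + x*y + y^2) / 3"
      unfolding e by (simp add: norm_mult norm_divide)
    ultimately have "cmod (T x - T y) \<le> cmod (x-y) * (3*\<rho>^2) / 3" by simp
    then show ?thesis by (simp add: dist_norm mult.commute)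
  qed
  obtain z where z: "z \<in> cball 0 \<rho>" "T z = z"
    using Banach_fix[of "cball 0 \<rho>" "\<rho>^2" T] Tmap lip r0
    by (auto simp: complete_eq_closed power_less_one_iff)
  have "phi_Ne z = w" using z(2) unfolding phi_Ne_def T_def c_def
    by (metis add_diff_cancel_left' add_diff_eq diff_add_cancel)
  moreover have "z \<in> ball 0 1" using z(1) r0 by auto
  ultimately show ?thesis unfolding Omega_Ne_def by blast
qed

lemma real_Omega:
  assumes "w \<in> Omega_Ne" "Im w = 0"
  shows "Re w < 5/3"
proof -
  obtain z where z: "cmod z < 1" "w = phi_Ne z" using assms unfolding Omega_Ne_def by auto
  define x where "x = Re z"
  define y where "y = Im z"
  have zz: "z = Complex x y" by (simp add: x_def y_def)
  have ax: "\<bar>x\<bar> < 1" using abs_Re_le_cmod[of z] z(1) x_def by linarith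
  then have x1: "x^2 < 1" by (simp add: abs_square_less_1)
  have z3: "z^3 = Complex (x^3 - 3*x*y^2) (3*x^2*y - y^3)"
    by (simp add: zz complex_eq_iff power2_eq_square power3_eq_cube algebra_simps)
  have wz: "w = 1 + z - z^3/3" using z(2) by (simp add: phi_Ne_def)
  have "Im w = y - (3*x^2*y - y^3)/3" unfolding wz using z3 by (simp add: y_def)
  also have "\<dots> = y * (1 - x^2 + y^2/3)" by (simp add: field_simps power2_eq_square power3_eq_cube)
  finally have "Im w = y * (1 - x^2 + y^2/3)" .
  moreover have "1 - x^2 + y^2/3 > 0" using x1 by (smt (verit) zero_le_power2 divide_nonneg_pos)
  ultimately have y0: "y = 0" using assms(2) by simp
  have "Re w = 1 + x - (x^3 - 3*x*y^2)/3" unfolding wz using z3 by (simp add: x_def)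
  then have "Re w = 1 + x - x^3/3" using y0 by simp
  moreover have "x < 1" "-1 < x" using ax by auto
  moreover have "2/3 - x + x^3/3 = (1-x)^2*(2+x)/3"
    by (simp add: power2_eq_square power3_eq_cube algebra_simps)
  moreover have "(1-x)^2*(2+x)/3 > 0" using calculation by auto
  ultimately show ?thesis by linarith
qed

lemma taylor_factor:
  assumes holf: "f holomorphic_on ball 0 1"
  obtains K where "K holomorphic_on ball 0 1"
    "\<And>w. w \<in> ball 0 1 \<Longrightarrow> f w = (\<Sum>i<m. (deriv^^i) f 0 / fact i * w^i) + w^m * K w"
proof -
  define K where "K w = suminf (\<lambda>i. (deriv ^^ (i + m)) f 0 / (fact(i + m)) * w^i)" for w
  have sumsK: "(\<lambda>i. (deriv ^^ (i + m)) f 0 / (fact(i + m)) * w^i) sums K w"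
   and feq: "f w = (\<Sum>i<m. (deriv^^i) f 0 / fact i * w^i) + w^m * K w"
       if w: "w \<in> ball 0 1" for w
  proof -
    define powf where "powf = (\<lambda>i. (deriv ^^ i) f 0/(fact i) * w^i)"
    have "(\<lambda>i. (deriv ^^ i) f 0/(fact i) * (w - 0)^i) sums f w"
      by (rule holomorphic_power_series [OF holf w])
    then have "powf sums f w"
      unfolding powf_def by (simp only: diff_zero)
    then have fsums: "(\<lambda>i. powf (i+m)) sums (f w - (\<Sum>i<m. powf i))"
      by (subst sums_iff_shift) (use \<open>powf sums f w\<close> in simp)
    then have *: "summable (\<lambda>i. w ^ m * ((deriv ^^ (i + m)) f 0 * w ^ i / fact (i + m)))"
      unfolding powf_def using sums_summable
      by (auto simp: power_add mult_ac)
    have "summable (\<lambda>i. (deriv ^^ (i + m)) f 0 * w ^ i / fact (i + m))"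
    proof (cases "w=0")
      case False then show ?thesis
        using summable_mult [OF *, of "1 / w ^ m"] by simp
    next
      case True then show ?thesis
        by (auto simp: Power.semiring_1_class.power_0_left intro!: summable_finite [of "{0}"]
                 split: if_split_asm)
    qed
    then show sumsg: "(\<lambda>i. (deriv ^^ (i + m)) f 0 / (fact(i + m)) * w^i) sums K w"
      by (simp add: summable_sums_iff K_def)
    have "f w - (\<Sum>i<m. powf i) = w^m * K w"
      using sums_mult [OF sumsg, of "w ^ m"]
      by (intro sums_unique2 [OF fsums]) (auto simp: power_add mult_ac powf_def)
    then show "f w = (\<Sum>i<m. (deriv^^i) f 0 / fact i * w^i) + w^m * K w"
      unfolding powf_def by (simp add: algebra_simps)
  qed
  have "K holomorphic_on ball 0 1"
    using power_series_holomorphic[of 0 1 "\<lambda>i. (deriv ^^ (i + m)) f 0 / (fact(i + m))" K] sumsK by simp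
  then show ?thesis using that feq by blast
qed

lemma gen_schwarz:
  assumes holw: "\<omega> holomorphic_on ball 0 1"
    and lt: "\<And>z. z \<in> ball 0 1 \<Longrightarrow> cmod (z^n * \<omega> z) < 1"
    and z: "z \<in> ball 0 1"
  shows "cmod (\<omega> z) \<le> 1"
proof -
  have lt_a: "norm (\<omega> z) < a" if a: "1 < a" for a
  proof -
    have "root n (inverse a) < 1 \<or> n = 0"
    proof (cases "n = 0")
      case False
      have "inverse a < 1" using a by (simp add: inverse_less_1_iff)
      then show ?thesis using False by simp
    qed simp
    have "max (inverse a) (norm z) < 1"
      using z a by (simp_all add: inverse_less_1_iff)
    define b where "b = (if n = 0 then max (inverse a) (norm z) else max (root n (inverse a)) (norm z))"
    have b1: "b < 1" using \<open>max (inverse a) (norm z) < 1\<close> \<open>root n (inverse a) < 1 \<or> n = 0\<close> z b_def by auto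
    then obtain r where r: "b < r" and "r < 1"
      using Rats_dense_in_real by blast
    have "cmod z \<le> b" using b_def by simp
    then have nzr: "norm z < r" using r by linarith
    have "0 < r" using nzr by (meson norm_not_less_zero not_le order.strict_trans2)
    have ira: "inverse (r^n) < a"
    proof (cases "n = 0")
      case True then show ?thesis using a by simp
    next
      case False
      have "root n (inverse a) < r" using r b_def False by auto
      then have "(root n (inverse a))^n < r^n"
        using False by (intro power_strict_mono) (use a in auto)
      then have "inverse a < r^n" using False a by simp
      moreover have "0 < inverse a" using a by simp
      ultimately show ?thesis using less_imp_inverse_less[of "inverse a" "r^n"] by simp
    qed
    have holh': "\<omega> holomorphic_on ball 0 r"
      by (meson holw \<open>r < 1\<close> holomorphic_on_subset less_eq_real_def subset_ball)
    have conth': "continuous_on (cball 0 r) \<omega>"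
      by (meson \<open>r < 1\<close> dual_order.trans holw holomorphic_on_imp_continuous_on holomorphic_on_subset mem_ball_0 mem_cball_0 not_less subsetI)
    obtain w where w: "norm w = r" and lenw: "\<And>z. norm z < r \<Longrightarrow> norm(\<omega> z) \<le> norm(\<omega> w)"
      using conth' \<open>0 < r\<close> by (auto simp add: intro: Schwarz1 [OF holh'])
    have "w \<in> ball 0 1" using w \<open>r < 1\<close> by simp
    then have "r^n * cmod (\<omega> w) < 1" using lt[of w] w by (simp add: norm_mult norm_power)
    then have "cmod (\<omega> w) < inverse (r^n)" using \<open>0 < r\<close>
      by (simp add: field_simps)
    then show ?thesis using lenw[OF nzr] ira by linarith
  qed
  show "norm (\<omega> z) \<le> 1"
    using lt_a[of "norm (\<omega> z)"] by force
qed

definition Mob :: "complex \<Rightarrow> complex \<Rightarrow> complex" where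
  "Mob w z = (z - w) / (1 - cnj w * z)"

lemma Mob_eq: "Mob w = Moebius_function 0 w"
  by (simp add: fun_eq_iff Mob_def Moebius_function_simple)

lemma Mob_deriv:
  assumes "cnj w * z \<noteq> 1"
  shows "(Mob w has_field_derivative (1 - cnj w * w) / (1 - cnj w * z)^2) (at z)"
proof -
  have nz: "1 - cnj w * z \<noteq> 0" using assms by simp
  have d1: "((\<lambda>z. z - w) has_field_derivative 1) (at z)"
    using DERIV_diff[OF DERIV_ident DERIV_const[of w]] by simp
  have d2: "((\<lambda>z. 1 - cnj w * z) has_field_derivative - cnj w) (at z)"
    using DERIV_diff[OF DERIV_const[of 1] DERIV_cmult[OF DERIV_ident, of "cnj w"]] by simp
  have "(Mob w has_field_derivative (1 * (1 - cnj w * z) - (z - w) * (- cnj w)) / ((1 - cnj w * z) * (1 - cnj w * z))) (at z)"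
    unfolding Mob_def[abs_def] by (rule DERIV_divide[OF d1 d2 nz])
  moreover have "(1 * (1 - cnj w * z) - (z - w) * (- cnj w)) / ((1 - cnj w * z) * (1 - cnj w * z)) = (1 - cnj w * w) / (1 - cnj w * z)^2"
    by (simp add: power2_eq_square algebra_simps)
  ultimately show ?thesis by simp
qed

lemma Mob_ball: "cmod w < 1 \<Longrightarrow> cmod z < 1 \<Longrightarrow> cmod (Mob w z) < 1"
  using Moebius_function_norm_lt_1[of w z 0] by (simp add: Mob_eq)

lemma Mob_hol: "cmod w < 1 \<Longrightarrow> Mob w holomorphic_on ball 0 1"
  using Moebius_function_holomorphic[of w 0] by (simp add: Mob_eq)

lemma cnj_mult_lt1: "cmod w < 1 \<Longrightarrow> cmod z < 1 \<Longrightarrow> cnj w * z \<noteq> 1"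
proof
  assume a: "cmod w < 1" "cmod z < 1" "cnj w * z = 1"
  have "cmod w * cmod z < 1 * 1" using a by (intro mult_strict_mono') auto
  then have "cmod (cnj w * z) < 1" by (simp add: norm_mult)
  then show False using a by simp
qed

lemma schwarz_pick:
  assumes holw: "\<omega> holomorphic_on ball 0 1"
    and le: "\<And>z. z \<in> ball 0 1 \<Longrightarrow> cmod (\<omega> z) \<le> 1"
    and z0: "z0 \<in> ball 0 1"
  shows "cmod (deriv \<omega> z0) \<le> (1 - cmod (\<omega> z0)^2) / (1 - cmod z0^2)"
proof (cases "\<exists>z1\<in>ball 0 1. cmod (\<omega> z1) = 1")
  case True
  then obtain z1 where z1: "z1 \<in> ball 0 1" "cmod (\<omega> z1) = 1" by blast
  have "\<omega> constant_on ball 0 1"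
  proof (rule maximum_modulus_principle[OF holw open_ball connected_ball open_ball order_refl z1(1)])
    fix z :: complex assume "z \<in> ball 0 1"
    then show "cmod (\<omega> z) \<le> cmod (\<omega> z1)" using le[of z] z1(2) by simp
  qed
  then obtain c where c: "\<And>x. x \<in> ball 0 1 \<Longrightarrow> \<omega> x = c" by (auto simp: constant_on_def)
  have ev: "eventually (\<lambda>x. \<omega> x = c) (nhds z0)"
    by (rule eventually_mono[OF eventually_nhds_in_open[OF open_ball z0]]) (rule c)
  have "deriv \<omega> z0 = deriv (\<lambda>_. c) z0" by (rule deriv_cong_ev[OF ev refl])
  then have "deriv \<omega> z0 = 0" by simp
  moreover have "cmod (\<omega> z0) = 1" using c z0 z1 by auto
  ultimately show ?thesis by simp
next
  case False
  have lt: "cmod (\<omega> z) < 1" if "z \<in> ball 0 1" for z :: complex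
  proof -
    have "cmod (\<omega> z) \<noteq> 1" using False that by blast
    then show ?thesis using le[OF that] by simp
  qed
  define b where "b = \<omega> z0"
  have b1: "cmod b < 1" using lt z0 b_def by blast
  have nz0: "cmod z0 < 1" "cmod (-z0) < 1" using z0 by auto
  define h where "h = (\<lambda>\<zeta>. Mob b (\<omega> (Mob (-z0) \<zeta>)))"
  have Mball: "Mob (-z0) \<zeta> \<in> ball 0 1" if "\<zeta> \<in> ball 0 1" for \<zeta>
    using Mob_ball[OF nz0(2)] that by simp
  have holh: "h holomorphic_on ball 0 1"
    unfolding h_def
  proof (rule holomorphic_on_compose[of _ _ "Mob b", unfolded o_def])
    show "(\<lambda>\<zeta>. \<omega> (Mob (- z0) \<zeta>)) holomorphic_on ball 0 1"
      by (rule holomorphic_on_compose[of _ _ \<omega>, unfolded o_def])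
         (use Mob_hol[OF nz0(2)] Mball in \<open>auto intro: holomorphic_on_subset[OF holw]\<close>)
    show "Mob b holomorphic_on (\<lambda>\<zeta>. \<omega> (Mob (- z0) \<zeta>)) ` ball 0 1"
      by (rule holomorphic_on_subset[OF Mob_hol[OF b1]]) (use lt Mball in auto)
  qed
  have M0: "Mob (-z0) 0 = z0" by (simp add: Mob_def)
  have h0: "h 0 = 0" by (simp add: h_def M0 b_def Mob_def)
  have hlt: "\<And>z. cmod z < 1 \<Longrightarrow> cmod (h z) < 1"
    unfolding h_def using Mob_ball[OF b1] lt Mball by simp
  have dh1: "cmod (deriv h 0) \<le> 1"
    using Schwarz_Lemma(2)[OF holh h0 hlt, of 0] by simp
  have dM1: "(Mob (-z0) has_field_derivative (1 - cmod z0 ^2)) (at 0)"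
  proof -
    have "1 - z0 * cnj z0 = 1 - (complex_of_real (cmod z0))^2" using complex_norm_square[of z0] by simp
    then show ?thesis using Mob_deriv[of "-z0" 0] by (simp add: mult.commute)
  qed
  have dw: "(\<omega> has_field_derivative deriv \<omega> z0) (at z0)"
    using holw z0 by (meson DERIV_deriv_iff_field_differentiable holomorphic_on_imp_differentiable_at open_ball)
  have bb: "1 - cnj b * b = of_real (1 - cmod b ^2)" using complex_norm_square[of b] by (simp add: mult.commute)
  have "cmod b ^2 < 1" using power_strict_mono[of "cmod b" 1 2] b1 by simp
  then have bnz: "1 - cmod b ^2 \<noteq> 0" by simp
  have dM2: "(Mob b has_field_derivative 1 / of_real (1 - cmod b ^2)) (at b)"
    using Mob_deriv[of b b] cnj_mult_lt1[OF b1 b1] bb bnz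
    by (simp add: power2_eq_square)
  have "(h has_field_derivative (1 / of_real (1 - cmod b ^2)) * (deriv \<omega> z0 * (1 - cmod z0 ^2))) (at 0)"
    unfolding h_def
    by (rule DERIV_chain2[OF _ DERIV_chain2[OF _ dM1]]) (use dM2 dw M0 b_def in auto)
  then have "deriv h 0 = deriv \<omega> z0 * (1 - cmod z0 ^2) / of_real (1 - cmod b ^2)"
    by (simp add: DERIV_imp_deriv)
  moreover have pos: "0 < 1 - cmod b ^2" "0 < 1 - cmod z0 ^2"
    using power_strict_mono[of "cmod b" 1 2] power_strict_mono[of "cmod z0" 1 2] b1 nz0 by simp_all
  moreover have "cmod (1 - (complex_of_real (cmod z0))^2) = 1 - cmod z0^2"
  proof -
    have "(1 - (complex_of_real (cmod z0))^2) = of_real (1 - cmod z0^2)" by simp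
    then show ?thesis using pos by (metis norm_of_real abs_of_pos)
  qed
  moreover have "cmod (1 - (complex_of_real (cmod b))^2) = 1 - cmod b^2"
  proof -
    have "(1 - (complex_of_real (cmod b))^2) = of_real (1 - cmod b^2)" by simp
    then show ?thesis using pos by (metis norm_of_real abs_of_pos)
  qed
  ultimately have "cmod (deriv h 0) = cmod (deriv \<omega> z0) * (1 - cmod z0 ^2) / (1 - cmod b ^2)"
    by (simp add: norm_mult norm_divide)
  then have "cmod (deriv \<omega> z0) * (1 - cmod z0 ^2) / (1 - cmod b ^2) \<le> 1"
    using dh1 by simp
  moreover note pos
  ultimately show ?thesis using b_def by (simp add: field_simps)
qed

lemma S1: "(r::real) * (1 - r^(2*n)) = (1 - r^2) * (\<Sum>j<n. r^(2*j+1))"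
proof (induction n)
  case 0 then show ?case by simp
next
  case (Suc n)
  have "(1 - r^2) * (\<Sum>j<Suc n. r^(2*j+1)) = r * (1 - r^(2*n)) + (1 - r^2) * r^(2*n+1)"
    using Suc by (simp add: algebra_simps)
  also have "\<dots> = r * (1 - r^(2*Suc n))"
    by (simp add: algebra_simps power_add power2_eq_square)
  finally show ?case by simp
qed

lemma S2: "0 \<le> (r::real) \<Longrightarrow> r \<le> 1 \<Longrightarrow> (\<Sum>j<n. r^(2*j+1)) \<le> real n"
proof -
  assume r: "0 \<le> r" "r \<le> 1"
  have "(\<Sum>j<n. r^(2*j+1)) \<le> (\<Sum>j<n. (1::real))"
    by (intro sum_mono power_le_one) (use r in auto)
  then show ?thesis by simp
qed

lemma pair_ineq: "0 \<le> (r::real) \<Longrightarrow> r \<le> 1 \<Longrightarrow> r^a + r^b \<le> 1 + r^(a+b)"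
proof -
  assume r: "0 \<le> r" "r \<le> 1"
  have "0 \<le> (1 - r^a) * (1 - r^b)"
    using r by (intro mult_nonneg_nonneg) (simp_all add: power_le_one)
  then show ?thesis by (simp add: algebra_simps power_add)
qed

lemma S3: "0 \<le> (r::real) \<Longrightarrow> r \<le> 1 \<Longrightarrow> 2 * (\<Sum>j<n. r^(2*j+1)) \<le> real n * (1 + r^(2*n))"
proof -
  assume r: "0 \<le> r" "r \<le> 1"
  have re: "(\<Sum>j<n. r^(2*(n - Suc j)+1)) = (\<Sum>j<n. r^(2*j+1))"
    by (rule sum.nat_diff_reindex)
  have "2 * (\<Sum>j<n. r^(2*j+1)) = (\<Sum>j<n. r^(2*j+1) + r^(2*(n - Suc j)+1))"
    using re by (simp add: sum.distrib)
  also have "\<dots> \<le> (\<Sum>j<n. 1 + r^(2*n))"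
  proof (intro sum_mono)
    fix j assume "j \<in> {..<n}"
    then have "(2*j+1) + (2*(n - Suc j)+1) = 2*n" by auto
    then show "r^(2*j+1) + r^(2*(n - Suc j)+1) \<le> 1 + r^(2*n)"
      using pair_ineq[OF r, of "2*j+1" "2*(n - Suc j)+1"] by simp
  qed
  finally show ?thesis by simp
qed

lemma R_ineq:
  fixes r t :: real and n :: nat
  assumes r: "0 \<le> r" "r < 1" and t: "0 \<le> t" "t \<le> 1" and n: "n \<ge> 1"
  shows "(real n * r^n * t + r * r^n * (1 - t^2) / (1 - r^2)) / (1 - (r^n)^2 * t^2)
           \<le> real n * r^n / (1 - (r^n)^2)"
proof -
  define s where "s = r^n"
  define \<Phi> where "\<Phi> = (\<Sum>j<n. r^(2*j+1))"
  have s01: "0 \<le> s" "s < 1 \<or> n = 0"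
    using r by (auto simp: s_def power_less_one_iff)
  have S1': "r * (1 - s^2) = (1 - r^2) * \<Phi>"
    using S1[of r n] by (simp add: s_def \<Phi>_def power_mult[symmetric] mult.commute)
  have S2': "\<Phi> \<le> n" using S2[of r n] r by (simp add: \<Phi>_def)
  have S3': "2 * \<Phi> \<le> n * (1 + s^2)"
    using S3[of r n] r by (simp add: \<Phi>_def s_def power_mult[symmetric] mult.commute)
  show ?thesis
  proof (cases "n = 0")
    case True then show ?thesis using n by simp
  next
    case False
    then have s1: "s < 1" using s01 by simp
    have r2: "0 < 1 - r^2" using r by (simp add: power_less_one_iff abs_square_less_1)
    have s2: "0 < 1 - s^2" using s1 s01 by (simp add: power_less_one_iff abs_square_less_1)
    have st: "s^2 * t^2 \<le> s^2" using t s01 by (simp add: mult_left_le power_le_one)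
    have st2: "0 < 1 - s^2 * t^2" using st s2 by linarith
    have rr: "r / (1 - r^2) = \<Phi> / (1 - s^2)"
      using S1' r2 s2 by (simp add: field_simps)
    have K0: "0 \<le> (1-t) * (n - \<Phi>) + t * (n*(1+s^2) - 2*\<Phi>)"
      using t S2' S3' by (intro add_nonneg_nonneg mult_nonneg_nonneg) auto
    have K: "n * t * (1 - s^2) + (1 - t^2) * \<Phi> \<le> n * (1 - s^2 * t^2)"
    proof -
      have "n * (1 - s^2 * t^2) - (n * t * (1 - s^2) + (1 - t^2) * \<Phi>)
            = (1 - t) * ((1-t) * (n - \<Phi>) + t * (n*(1+s^2) - 2*\<Phi>))"
        by (simp add: algebra_simps power2_eq_square)
      also have "\<dots> \<ge> 0" using K0 t by simp
      finally show ?thesis by simp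
    qed
    have "real n * s * t + r * s * (1 - t^2) / (1 - r^2)
          = s * (n * t * (1 - s^2) + (1 - t^2) * \<Phi>) / (1 - s^2)"
    proof -
      have "r * s * (1 - t^2) / (1 - r^2) = s * (1 - t^2) * (r / (1 - r^2))" by simp
      also have "\<dots> = s * (1 - t^2) * \<Phi> / (1 - s^2)" using rr by simp
      finally show ?thesis using s2 by (simp add: field_simps)
    qed
    also have "\<dots> \<le> s * (n * (1 - s^2 * t^2)) / (1 - s^2)"
      using K s01 s2 by (intro divide_right_mono mult_left_mono) auto
    finally have "real n * s * t + r * s * (1 - t^2) / (1 - r^2) \<le> s * (n * (1 - s^2 * t^2)) / (1 - s^2)" .
    then have "(real n * s * t + r * s * (1 - t^2) / (1 - r^2)) / (1 - s^2 * t^2)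
          \<le> s * (n * (1 - s^2 * t^2)) / (1 - s^2) / (1 - s^2 * t^2)"
      using st2 by (intro divide_right_mono) auto
    also have "\<dots> = real n * s / (1 - s^2)"
    proof -
      have X: "1 - s^2 * t^2 \<noteq> 0" using st2 by simp
      have "s * (n * (1 - s^2 * t^2)) / (1 - s^2) / (1 - s^2 * t^2) = (n * s) * (1 - s^2 * t^2) / ((1 - s^2) * (1 - s^2 * t^2))"
        by (simp add: divide_divide_eq_left mult_ac)
      also have "\<dots> = (n * s) / (1 - s^2)" using X by simp
      finally show ?thesis .
    qed
    finally show ?thesis by (simp add: s_def)
  qed
qed

lemma re_pos_lt: "Re u > 0 \<Longrightarrow> cmod (u - 1) < cmod (u + 1)"
proof -
  assume "Re u > 0"
  have "cmod (u - 1)^2 = (Re u - 1)^2 + (Im u)^2" by (simp add: cmod_power2)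
  moreover have "cmod (u + 1)^2 = (Re u + 1)^2 + (Im u)^2" by (simp add: cmod_power2)
  moreover have "(Re u - 1)^2 < (Re u + 1)^2" using \<open>Re u > 0\<close> by (simp add: power2_eq_square algebra_simps)
  ultimately have "cmod (u - 1)^2 < cmod (u + 1)^2" by simp
  then show ?thesis by (rule power2_less_imp_less) simp
qed

lemma frac_cancel_aux: "(a::complex) \<noteq> 0 \<Longrightarrow> b \<noteq> 0 \<Longrightarrow> z * (2 * c / (a * a)) / (b / a) = 2 * (z * c) / (a * b)"
  by (simp add: field_simps)

lemma P_est:
  fixes n :: nat and H :: "complex \<Rightarrow> complex"
  assumes n: "n \<ge> 1" and holH: "H holomorphic_on ball 0 1"
    and re: "\<And>z. z \<in> ball 0 1 \<Longrightarrow> Re (1 + z^n * H z) > 0"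
    and z: "z \<in> ball 0 1"
  shows "cmod (z^n * H z) \<le> 2 * cmod z^n / (1 - cmod z^n)"
    and "cmod (z * deriv (\<lambda>z. 1 + z^n * H z) z / (1 + z^n * H z)) \<le> 2 * n * cmod z^n / (1 - cmod z^(2*n))"
proof -
  define u where "u z = z^n * H z" for z
  have nz2: "2 + u z \<noteq> 0" if "z \<in> ball 0 1" for z
  proof -
    have g: "Re (2 + u z) > 1" using re[OF that] by (simp add: u_def)
    show ?thesis
    proof
      assume "2 + u z = 0"
      then have "Re (2 + u z) = 0" by simp
      with g show False by simp
    qed
  qed
  define \<omega> where "\<omega> z = H z / (2 + u z)" for z
  have hol\<omega>: "\<omega> holomorphic_on ball 0 1"
    unfolding \<omega>_def u_def using nz2 unfolding u_def by (intro holomorphic_intros holH) auto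
  define q where "q z = z^n * \<omega> z" for z
  have qu: "q z = u z / (2 + u z)" for z by (simp add: q_def \<omega>_def u_def)
  have qlt: "cmod (q z) < 1" if "z \<in> ball 0 1" for z
  proof -
    have "cmod ((1 + u z) - 1) < cmod ((1 + u z) + 1)"
      using re_pos_lt[of "1 + u z"] re[OF that] by (simp add: u_def)
    then have "cmod (u z) < cmod (2 + u z)" by (simp add: add.commute)
    then show ?thesis using nz2[OF that] by (simp add: qu norm_divide divide_less_eq)
  qed
  have qlt': "cmod (w^n * \<omega> w) < 1" if "w \<in> ball 0 1" for w
    using qlt[OF that] by (simp add: q_def)
  have \<omega>le: "cmod (\<omega> w) \<le> 1" if "w \<in> ball 0 1" for w
    by (rule gen_schwarz[OF hol\<omega> qlt' that])
  have q1: "1 - q z \<noteq> 0" "1 + q z \<noteq> 0" if "z \<in> ball 0 1" for z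
  proof -
    show "1 - q z \<noteq> 0"
    proof
      assume "1 - q z = 0"
      then have "q z = 1" by simp
      with qlt[OF that] show False by simp
    qed
    show "1 + q z \<noteq> 0"
    proof
      assume "1 + q z = 0"
      then have "q z = -1" by (simp add: add_eq_0_iff)
      with qlt[OF that] show False by simp
    qed
  qed
  have uq: "u w = 2 * q w / (1 - q w)" if "w \<in> ball 0 1" for w
  proof -
    have "1 - q w = 2 / (2 + u w)" using nz2[OF that] by (simp add: qu field_simps)
    then have "2 * q w / (1 - q w) = q w * (2 + u w)" by simp
    also have "\<dots> = u w" using nz2[OF that] by (simp add: qu)
    finally show ?thesis by simp
  qed
  define r where "r = cmod z"
  define s where "s = r^n"
  define t where "t = cmod (\<omega> z)"
  have r01: "0 \<le> r" "r < 1" using z r_def by auto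
  have s01: "0 \<le> s" "s < 1" using r01 n by (auto simp: s_def power_less_one_iff)
  have t01: "0 \<le> t" "t \<le> 1" using \<omega>le[OF z] t_def by auto
  have nq: "cmod (q z) = s * t" by (simp add: q_def norm_mult norm_power s_def r_def t_def)
  have qs: "cmod (q z) \<le> s" using nq s01 t01 by (simp add: mult_left_le)
  show "cmod (z^n * H z) \<le> 2 * cmod z^n / (1 - cmod z^n)"
  proof -
    have "cmod (z^n * H z) = 2 * cmod (q z) / cmod (1 - q z)"
      using uq[OF z] by (simp add: u_def norm_mult norm_divide)
    also have "\<dots> \<le> 2 * s / (1 - s)"
    proof (rule frac_le)
      show "0 \<le> 2 * s" using s01 by simp
      show "2 * cmod (q z) \<le> 2 * s" using qs by simp
      show "0 < 1 - s" using s01 by simp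
      show "1 - s \<le> cmod (1 - q z)" using qs norm_triangle_ineq2[of 1 "q z"] by simp
    qed
    finally show ?thesis by (simp add: s_def r_def)
  qed
  define P2 where "P2 w = (1 + q w) / (1 - q w)" for w
  have pP2: "1 + w^n * H w = P2 w" if "w \<in> ball 0 1" for w
  proof -
    have "1 + w^n * H w = 1 + 2 * q w / (1 - q w)" using uq[OF that] by (simp add: u_def)
    also have "\<dots> = P2 w" using q1[OF that] unfolding P2_def by (simp add: field_simps)
    finally show ?thesis .
  qed
  have ev: "eventually (\<lambda>w. 1 + w^n * H w = P2 w) (nhds z)"
    by (rule eventually_mono[OF eventually_nhds_in_open[OF open_ball z]]) (rule pP2)
  have dd: "deriv (\<lambda>z. 1 + z^n * H z) z = deriv P2 z" by (rule deriv_cong_ev[OF ev refl])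
  have d\<omega>: "(\<omega> has_field_derivative deriv \<omega> z) (at z)"
    using hol\<omega> z by (meson DERIV_deriv_iff_field_differentiable holomorphic_on_imp_differentiable_at open_ball)
  define q' where "q' = of_nat n * z^(n-1) * \<omega> z + deriv \<omega> z * z^n"
  have dq: "(q has_field_derivative q') (at z)"
  proof -
    have "(q has_field_derivative (of_nat n * (1 * z^(n - Suc 0))) * \<omega> z + deriv \<omega> z * z^n) (at z)"
      unfolding q_def[abs_def] by (rule DERIV_mult[OF DERIV_power[OF DERIV_ident] d\<omega>])
    then show ?thesis by (simp add: q'_def)
  qed
  have dP2: "(P2 has_field_derivative (q' * (1 - q z) - (1 + q z) * (- q')) / ((1 - q z) * (1 - q z))) (at z)"
    unfolding P2_def[abs_def]
    by (rule DERIV_divide[OF DERIV_add[OF DERIV_const dq, simplified] DERIV_diff[OF DERIV_const dq, simplified] q1(1)[OF z]])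
  then have dP2z: "deriv P2 z = 2 * q' / ((1 - q z) * (1 - q z))"
    by (simp add: DERIV_imp_deriv algebra_simps)
  have e1: "z * deriv (\<lambda>z. 1 + z^n * H z) z / (1 + z^n * H z) = 2 * (z * q') / ((1 - q z) * (1 + q z))"
  proof -
    have "z * deriv (\<lambda>z. 1 + z^n * H z) z / (1 + z^n * H z) = z * deriv P2 z / P2 z"
      using dd pP2[OF z] by simp
    also have "\<dots> = z * (2 * q' / ((1 - q z) * (1 - q z))) / ((1 + q z) / (1 - q z))"
      by (simp only: dP2z P2_def)
    also have "\<dots> = 2 * (z * q') / ((1 - q z) * (1 + q z))"
      using q1[OF z] by (rule frac_cancel_aux)
    finally show ?thesis .
  qed
  have zq: "z * q' = of_nat n * q z + z^(n+1) * deriv \<omega> z"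
  proof -
    have "z * z^(n-1) = z^n" using n by (metis Suc_diff_1 less_eq_Suc_le power_Suc zero_less_Suc One_nat_def)
    then show ?thesis by (simp add: q'_def q_def algebra_simps)
  qed
  have sp: "cmod (deriv \<omega> z) \<le> (1 - t^2) / (1 - r^2)"
    using schwarz_pick[OF hol\<omega> \<omega>le z] by (simp add: t_def r_def)
  have num: "cmod (2 * (z * q')) \<le> 2 * (real n * s * t + r * s * ((1 - t^2) / (1 - r^2)))"
  proof -
    have "cmod (z * q') \<le> cmod (of_nat n * q z) + cmod (z^(n+1) * deriv \<omega> z)"
      unfolding zq by (rule norm_triangle_ineq)
    also have "\<dots> = real n * (s * t) + r * s * cmod (deriv \<omega> z)"
      by (simp add: norm_mult norm_power nq r_def s_def)
    also have "\<dots> \<le> real n * (s * t) + r * s * ((1 - t^2) / (1 - r^2))"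
      using sp r01 s01 by (intro add_left_mono mult_left_mono) auto
    finally have "cmod (z * q') \<le> real n * (s * t) + r * s * ((1 - t^2) / (1 - r^2))" .
    moreover have "cmod (2 * (z * q')) = 2 * cmod (z * q')" by (simp add: norm_mult)
    moreover have "real n * (s * t) = real n * s * t" by (simp add: mult.assoc)
    ultimately have "cmod (z * q') \<le> real n * s * t + r * s * ((1 - t^2) / (1 - r^2))" by metis
    then have "2 * cmod (z * q') \<le> 2 * (real n * s * t + r * s * ((1 - t^2) / (1 - r^2)))" by (rule mult_left_mono) simp
    then show ?thesis using \<open>cmod (2 * (z * q')) = 2 * cmod (z * q')\<close> by metis
  qed
  have den: "1 - s^2 * t^2 \<le> cmod ((1 - q z) * (1 + q z))"
  proof -
    have "(1 - q z) * (1 + q z) = 1 - q z ^2" by (simp add: algebra_simps power2_eq_square)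
    moreover have "1 - cmod (q z ^2) \<le> cmod (1 - q z ^2)" using norm_triangle_ineq2[of 1 "q z^2"] by simp
    ultimately show ?thesis by (simp add: norm_power nq power_mult_distrib)
  qed
  have den0: "0 < 1 - s^2 * t^2"
  proof -
    have "s * t < 1" using nq qlt[OF z] by simp
    then have "(s*t)^2 < 1" using s01 t01 by (simp add: power_less_one_iff abs_square_less_1)
    then show ?thesis by (simp add: power_mult_distrib)
  qed
  have "cmod (z * deriv (\<lambda>z. 1 + z^n * H z) z / (1 + z^n * H z))
        \<le> 2 * (real n * s * t + r * s * ((1 - t^2) / (1 - r^2))) / (1 - s^2 * t^2)"
    unfolding e1 norm_divide
  proof (rule frac_le[OF _ num den0 den])
    have tt: "0 \<le> 1 - t^2" using t01 by (simp add: power_le_one)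
    have rr2: "0 < 1 - r^2" using r01 by (simp add: power_less_one_iff abs_square_less_1)
    have "0 \<le> (1 - t^2) / (1 - r^2)" using tt rr2 by simp
    then show "0 \<le> 2 * (real n * s * t + r * s * ((1 - t^2) / (1 - r^2)))"
      using s01 t01 r01 by (intro mult_nonneg_nonneg add_nonneg_nonneg) auto
  qed
  also have "\<dots> \<le> 2 * (real n * s / (1 - s^2))"
  proof -
    have Ri: "(real n * s * t + r * s * ((1 - t^2) / (1 - r^2))) / (1 - s^2 * t^2) \<le> real n * s / (1 - s^2)"
      using R_ineq[OF r01 t01 n] by (simp add: s_def)
    then have "2 * ((real n * s * t + r * s * ((1 - t^2) / (1 - r^2))) / (1 - s^2 * t^2)) \<le> 2 * (real n * s / (1 - s^2))"
      by (rule mult_left_mono) simp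
    then show ?thesis by (metis times_divide_eq_right)
  qed
  finally have X: "cmod (z * deriv (\<lambda>z. 1 + z^n * H z) z / (1 + z^n * H z)) \<le> 2 * (real n * s / (1 - s^2))" .
  have ss: "s^2 = cmod z^(2*n)" unfolding s_def r_def by (simp add: power_mult[symmetric] mult.commute)
  have "2 * (real n * s / (1 - s^2)) = 2 * n * cmod z^n / (1 - cmod z^(2*n))"
    unfolding ss by (simp add: s_def r_def)
  with X show "cmod (z * deriv (\<lambda>z. 1 + z^n * H z) z / (1 + z^n * H z)) \<le> 2 * n * cmod z^n / (1 - cmod z^(2*n))"
    by simp
qed

lemma hol_diff_at: "f holomorphic_on ball 0 1 \<Longrightarrow> w \<in> ball 0 1 \<Longrightarrow> (f has_field_derivative deriv f w) (at w)"
  by (meson DERIV_deriv_iff_field_differentiable holomorphic_on_imp_differentiable_at open_ball)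

lemma ev_ball: "w \<in> ball 0 1 \<Longrightarrow> (\<And>x. x \<in> ball 0 1 \<Longrightarrow> f x = g x) \<Longrightarrow> eventually (\<lambda>x. f x = g x) (nhds w)"
  by (rule eventually_mono[OF eventually_nhds_in_open[OF open_ball]])

lemma A_rep:
  assumes n: "n \<ge> 1" and g: "g \<in> A_cls n"
  obtains K where "K holomorphic_on ball 0 1" "\<And>w. w \<in> ball 0 1 \<Longrightarrow> g w = w + w^(n+1) * K w"
proof -
  have holg: "g holomorphic_on ball 0 1" and g0: "g 0 = 0" and g1: "deriv g 0 = 1"
    and gk: "\<And>k. 2 \<le> k \<Longrightarrow> k \<le> n \<Longrightarrow> (deriv ^^ k) g 0 = 0"
    using g by (auto simp: A_cls_def)
  obtain K where K: "K holomorphic_on ball 0 1"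
    "\<And>w. w \<in> ball 0 1 \<Longrightarrow> g w = (\<Sum>i<n+1. (deriv^^i) g 0 / fact i * w^i) + w^(n+1) * K w"
    using taylor_factor[OF holg] by blast
  have "(\<Sum>i<n+1. (deriv^^i) g 0 / fact i * w^i) = w" for w
  proof -
    have "(\<Sum>i<n+1. (deriv^^i) g 0 / fact i * w^i) = (\<Sum>i<n+1. if i = 1 then w else 0)"
    proof (rule sum.cong[OF refl])
      fix i assume i: "i \<in> {..<n+1}"
      show "(deriv^^i) g 0 / fact i * w^i = (if i = 1 then w else 0)"
      proof (cases "i = 0")
        case True then show ?thesis using g0 by simp
      next
        case False
        show ?thesis
        proof (cases "i = 1")
          case True then show ?thesis using g1 by simp
        next
          case False
          then have "2 \<le> i" "i \<le> n" using \<open>i \<noteq> 0\<close> i by auto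
          then show ?thesis using gk False by simp
        qed
      qed
    qed
    also have "\<dots> = w" using n by (simp add: sum.delta)
    finally show ?thesis .
  qed
  then show ?thesis using that K by simp
qed

lemma P_rep:
  assumes n: "n \<ge> 1" and p: "p \<in> P_cls n"
  obtains H where "H holomorphic_on ball 0 1" "\<And>w. w \<in> ball 0 1 \<Longrightarrow> p w = 1 + w^n * H w"
proof -
  have holp: "p holomorphic_on ball 0 1" and p0: "p 0 = 1"
    and pk: "\<And>k. 1 \<le> k \<Longrightarrow> k < n \<Longrightarrow> (deriv ^^ k) p 0 = 0"
    using p by (auto simp: P_cls_def)
  obtain K where K: "K holomorphic_on ball 0 1"
    "\<And>w. w \<in> ball 0 1 \<Longrightarrow> p w = (\<Sum>i<n. (deriv^^i) p 0 / fact i * w^i) + w^n * K w"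
    using taylor_factor[OF holp] by blast
  have "(\<Sum>i<n. (deriv^^i) p 0 / fact i * w^i) = 1" for w
  proof -
    have "(\<Sum>i<n. (deriv^^i) p 0 / fact i * w^i) = (\<Sum>i<n. if i = 0 then 1 else 0)"
    proof (rule sum.cong[OF refl])
      fix i assume i: "i \<in> {..<n}"
      show "(deriv^^i) p 0 / fact i * w^i = (if i = 0 then 1 else 0)"
      proof (cases "i = 0")
        case True then show ?thesis using p0 by simp
      next
        case False
        then show ?thesis using pk[of i] i by simp
      qed
    qed
    also have "\<dots> = 1" using n by (simp add: sum.delta)
    finally show ?thesis .
  qed
  then show ?thesis using that K by simp
qed

lemma Qg_rep:
  assumes n: "n \<ge> 1" and g: "g \<in> Sstar_cls n \<alpha>"
  obtains Hg where "Hg holomorphic_on ball 0 1" "\<And>w. w \<in> ball 0 1 \<Longrightarrow> Qf g w = 1 + w^n * Hg w"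
proof -
  have gA: "g \<in> A_cls n" and gnz: "\<And>w. w \<in> ball 0 1 \<Longrightarrow> w \<noteq> 0 \<Longrightarrow> g w \<noteq> 0"
    using g by (auto simp: Sstar_cls_def)
  obtain K where holK: "K holomorphic_on ball 0 1" and gK: "\<And>w. w \<in> ball 0 1 \<Longrightarrow> g w = w + w^(n+1) * K w"
    using A_rep[OF n gA] by blast
  define E where "E w = 1 + w^n * K w" for w
  have Enz: "E w \<noteq> 0" if "w \<in> ball 0 1" for w
  proof (cases "w = 0")
    case True then show ?thesis using n by (simp add: E_def power_0_left)
  next
    case False
    have "g w = w * E w" using gK[OF that] by (simp add: E_def algebra_simps)
    then show ?thesis using gnz[OF that False] by auto
  qed
  have holK': "deriv K holomorphic_on ball 0 1" by (rule holomorphic_deriv[OF holK open_ball])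
  define Hg where "Hg w = (of_nat n * K w + w * deriv K w) / E w" for w
  have holHg: "Hg holomorphic_on ball 0 1"
    unfolding Hg_def E_def using Enz unfolding E_def by (intro holomorphic_intros holK holK') auto
  have dg: "deriv g w = 1 + (of_nat (n+1) * w^n * K w + w^(n+1) * deriv K w)" if w: "w \<in> ball 0 1" for w
  proof -
    have "deriv g w = deriv (\<lambda>w. w + w^(n+1) * K w) w"
      by (rule deriv_cong_ev[OF ev_ball[OF w gK] refl])
    moreover have "((\<lambda>w. w + w^(n+1) * K w) has_field_derivative
       1 + (of_nat (n+1) * (1 * w^(n + 1 - Suc 0)) * K w + deriv K w * w^(n+1))) (at w)"
      by (rule DERIV_add[OF DERIV_ident DERIV_mult[OF DERIV_power[OF DERIV_ident] hol_diff_at[OF holK w]]])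
    ultimately show ?thesis by (simp add: DERIV_imp_deriv mult_ac)
  qed
  have "Qf g w = 1 + w^n * Hg w" if w: "w \<in> ball 0 1" for w
  proof (cases "w = 0")
    case True then show ?thesis using n by (simp add: Qf_def)
  next
    case False
    have gw: "g w = w * E w" using gK[OF w] by (simp add: E_def algebra_simps)
    have "Qf g w = w * deriv g w / (w * E w)" using False gw by (simp add: Qf_def)
    also have "\<dots> = deriv g w / E w" using False Enz[OF w] by simp
    also have "\<dots> = (E w + w^n * (of_nat n * K w + w * deriv K w)) / E w"
      unfolding dg[OF w] E_def by (simp add: algebra_simps)
    also have "\<dots> = 1 + w^n * Hg w" using Enz[OF w] by (simp add: Hg_def field_simps)
    finally show ?thesis .
  qed
  then show ?thesis using that holHg by blast
qed

lemma Qg_est: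
  assumes n: "n \<ge> 1" and a: "\<alpha> < 1" and g: "g \<in> Sstar_cls n \<alpha>" and z: "z \<in> ball 0 1"
  shows "cmod (Qf g z - 1) \<le> 2 * (1 - \<alpha>) * cmod z^n / (1 - cmod z^n)"
proof -
  obtain Hg where holHg: "Hg holomorphic_on ball 0 1" and Q: "\<And>w. w \<in> ball 0 1 \<Longrightarrow> Qf g w = 1 + w^n * Hg w"
    using Qg_rep[OF n g] by blast
  have re: "Re (Qf g w) > \<alpha>" if "w \<in> ball 0 1" for w using g that by (auto simp: Sstar_cls_def)
  define HP where "HP w = Hg w / of_real (1 - \<alpha>)" for w
  have holHP: "HP holomorphic_on ball 0 1" unfolding HP_def using a by (intro holomorphic_intros holHg) auto
  have "Re (1 + w^n * HP w) > 0" if w: "w \<in> ball 0 1" for w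
  proof -
    have "1 + w^n * HP w = (Qf g w - of_real \<alpha>) / of_real (1 - \<alpha>)"
      using Q[OF w] a by (simp add: HP_def field_simps)
    then have "Re (1 + w^n * HP w) = (Re (Qf g w) - \<alpha>) / (1 - \<alpha>)"
      by (simp add: Re_divide_of_real)
    then show ?thesis using re[OF w] a by simp
  qed
  then have est: "cmod (z^n * HP z) \<le> 2 * cmod z^n / (1 - cmod z^n)"
    using P_est(1)[OF n holHP _ z] by blast
  have "Qf g z - 1 = of_real (1 - \<alpha>) * (z^n * HP z)" using Q[OF z] a by (simp add: HP_def)
  then have "cmod (Qf g z - 1) = cmod (complex_of_real (1 - \<alpha>)) * cmod (z^n * HP z)" by (simp only: norm_mult)
  also have "\<dots> = (1 - \<alpha>) * cmod (z^n * HP z)" by (simp only: norm_of_real) (use a in simp)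
  also have "\<dots> \<le> (1 - \<alpha>) * (2 * cmod z^n / (1 - cmod z^n))" using est a by (intro mult_left_mono) auto
  also have "\<dots> = 2 * (1 - \<alpha>) * cmod z^n / (1 - cmod z^n)" by (simp add: mult_ac)
  finally show ?thesis .
qed

lemma Qf_bound:
  assumes n: "n \<ge> 1" and a: "\<alpha> < 1" and f: "f \<in> CSstar_cls n \<alpha>" and z: "z \<in> ball 0 1"
  shows "cmod (Qf f z - 1) \<le> 2 * (1 - \<alpha>) * cmod z^n / (1 - cmod z^n) + 2 * n * cmod z^n / (1 - cmod z^(2*n))"
proof -
  obtain g where g: "g \<in> Sstar_cls n \<alpha>" and pp: "(\<lambda>z. if z = 0 then 1 else f z / g z) \<in> P_cls n"
    using f by (auto simp: CSstar_cls_def)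
  define pp where "pp = (\<lambda>z. if z = 0 then 1 else f z / g z)"
  have ppP: "pp \<in> P_cls n" using pp by (simp add: pp_def)
  obtain Hp where holHp: "Hp holomorphic_on ball 0 1" and Hp: "\<And>w. w \<in> ball 0 1 \<Longrightarrow> pp w = 1 + w^n * Hp w"
    using P_rep[OF n ppP] by blast
  have ppre: "Re (pp w) > 0" if "w \<in> ball 0 1" for w using ppP that by (auto simp: P_cls_def)
  have re: "Re (1 + w^n * Hp w) > 0" if "w \<in> ball 0 1" for w using ppre[OF that] Hp[OF that] by simp
  have gA: "g \<in> A_cls n" and gnz: "\<And>w. w \<in> ball 0 1 \<Longrightarrow> w \<noteq> 0 \<Longrightarrow> g w \<noteq> 0"
    using g by (auto simp: Sstar_cls_def)
  have holg: "g holomorphic_on ball 0 1" and g0: "g 0 = 0" using gA by (auto simp: A_cls_def)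
  have f0: "f 0 = 0" using f by (auto simp: CSstar_cls_def A_cls_def)
  define P where "P w = 1 + w^n * Hp w" for w
  have holP: "P holomorphic_on ball 0 1" unfolding P_def by (intro holomorphic_intros holHp)
  have fgP: "f w = g w * P w" if w: "w \<in> ball 0 1" for w
  proof (cases "w = 0")
    case True then show ?thesis using f0 g0 by simp
  next
    case False
    have "pp w = f w / g w" using False by (simp add: pp_def)
    then show ?thesis using Hp[OF w] gnz[OF w False] by (simp add: P_def field_simps)
  qed
  have Pnz: "P z \<noteq> 0"
  proof
    assume "P z = 0"
    then have "Re (1 + z^n * Hp z) = 0" by (simp add: P_def)
    with re[OF z] show False by simp
  qed
  show ?thesis
  proof (cases "z = 0")
    case True
    then show ?thesis using n a by (simp add: Qf_def power_0_left)
  next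
    case False
    have gz: "g z \<noteq> 0" using gnz[OF z False] .
    have "deriv f z = deriv (\<lambda>w. g w * P w) z"
      by (rule deriv_cong_ev[OF ev_ball[OF z fgP] refl])
    also have "\<dots> = deriv g z * P z + deriv P z * g z"
      by (rule DERIV_imp_deriv[OF DERIV_mult[OF hol_diff_at[OF holg z] hol_diff_at[OF holP z]]])
    finally have df: "deriv f z = deriv g z * P z + deriv P z * g z" .
    have "Qf f z = z * deriv f z / (g z * P z)" using False fgP[OF z] by (simp add: Qf_def)
    also have "\<dots> = z * deriv g z / g z + z * deriv P z / P z"
      unfolding df using gz Pnz by (simp add: field_simps)
    also have "\<dots> = Qf g z + z * deriv P z / P z" using False by (simp add: Qf_def)
    finally have "Qf f z - 1 = (Qf g z - 1) + z * deriv P z / P z" by simp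
    then have "cmod (Qf f z - 1) \<le> cmod (Qf g z - 1) + cmod (z * deriv P z / P z)"
      by (metis norm_triangle_ineq)
    also have "\<dots> \<le> 2 * (1 - \<alpha>) * cmod z^n / (1 - cmod z^n) + 2 * n * cmod z^n / (1 - cmod z^(2*n))"
    proof (rule add_mono)
      show "cmod (Qf g z - 1) \<le> 2 * (1 - \<alpha>) * cmod z^n / (1 - cmod z^n)" by (rule Qg_est[OF n a g z])
      show "cmod (z * deriv P z / P z) \<le> 2 * n * cmod z^n / (1 - cmod z^(2*n))"
        using P_est(2)[OF n holHp re z] unfolding P_def[abs_def] by simp
    qed
    finally show ?thesis by simp
  qed
qed

lemma sym_deriv:
  assumes holF: "F holomorphic_on ball 0 1" and u: "cmod u = 1"
    and sym: "\<And>z. z \<in> ball 0 1 \<Longrightarrow> F (u * z) = u^j * F z"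
    and ne: "u^k \<noteq> u^j"
  shows "(deriv ^^ k) F 0 = 0"
proof -
  have uz: "u * w \<in> ball 0 1" if "w \<in> ball 0 1" for w using that u by (simp add: norm_mult)
  have b0: "(0::complex) \<in> ball 0 1" by simp
  have "(deriv ^^ k) (\<lambda>w. F (u * w)) 0 = u^k * (deriv ^^ k) F (u * 0)"
    by (rule higher_deriv_compose_linear[OF holF open_ball open_ball b0 uz])
  moreover have "(deriv ^^ k) (\<lambda>w. F (u * w)) 0 = (deriv ^^ k) (\<lambda>w. u^j * F w) 0"
    by (rule higher_deriv_cong_ev[OF ev_ball[OF b0 sym] refl])
  moreover have "(deriv ^^ k) (\<lambda>w. u^j * F w) 0 = u^j * (deriv ^^ k) F 0"
    by (rule higher_deriv_cmult[OF holF b0 open_ball])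
  ultimately have "(u^k - u^j) * (deriv ^^ k) F 0 = 0" by (simp add: algebra_simps)
  then show ?thesis using ne by simp
qed

definition rootu :: "nat \<Rightarrow> complex" where
  "rootu n = exp (2 * pi * \<i> / of_nat n)"

lemma rootu_norm: "cmod (rootu n) = 1"
  by (simp add: rootu_def norm_exp_eq_Re)

lemma rootu_pow: "rootu n ^ m = exp (2 * pi * \<i> * of_nat m / of_nat n)"
  unfolding rootu_def by (simp add: exp_of_nat_mult[symmetric] mult_ac)

lemma rootu_n: "n \<ge> 1 \<Longrightarrow> rootu n ^ n = 1"
  by (simp add: rootu_pow)

lemma rootu_ne1: assumes "0 < m" "m < n" shows "rootu n ^ m \<noteq> 1"
proof
  assume "rootu n ^ m = 1"
  then obtain k :: int where k: "2 * pi * real m / real n = of_int (2 * k) * pi"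
    unfolding rootu_pow exp_eq_1 by auto
  have "real m / real n = of_int k"
  proof -
    have "2 * pi * (real m / real n) = 2 * pi * of_int k" using k by (simp add: mult_ac)
    moreover have "2 * pi \<noteq> 0" by simp
    ultimately show ?thesis by (metis mult_cancel_left)
  qed
  moreover have "0 < real m / real n" "real m / real n < 1" using assms by auto
  ultimately show False by (metis of_int_0_less_iff of_int_less_1_iff not_le zero_less_one_class.zero_le_one int_one_le_iff_zero_less less_le_not_le)
qed

lemma rootu_ne: assumes "j \<le> k" "k < j + n" "j \<noteq> k" shows "rootu n ^ k \<noteq> rootu n ^ j"
proof
  assume "rootu n ^ k = rootu n ^ j"
  moreover have "rootu n ^ k = rootu n ^ j * rootu n ^ (k - j)" using assms by (simp add: power_add[symmetric])
  moreover have "rootu n \<noteq> 0" by (simp add: rootu_def)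
  ultimately have "rootu n ^ (k - j) = 1" by simp
  moreover have "0 < k - j" "k - j < n" using assms by auto
  ultimately show False using rootu_ne1[of "k - j" n] by blast
qed

lemma ab_lem:
  assumes "cmod w < 1"
  shows "(Re w)^2 + (Im w)^2 < 1" "(1 - Re w)^2 + (Im w)^2 > 0"
proof -
  have "cmod w ^2 < 1" using assms power_strict_mono[of "cmod w" 1 2] by simp
  then show ab: "(Re w)^2 + (Im w)^2 < 1" by (simp add: cmod_power2)
  have "(Re w)^2 < 1" using ab zero_le_power2[of "Im w"] by linarith
  then have "\<bar>Re w\<bar> < 1" by (simp add: abs_square_less_1)
  then have "(1 - Re w)^2 > 0" by simp
  then show "(1 - Re w)^2 + (Im w)^2 > 0" using zero_le_power2[of "Im w"] by linarith
qed

lemma re_inv_half: "cmod w < 1 \<Longrightarrow> Re (1 / (1 - w)) > 1/2"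
proof -
  assume w: "cmod w < 1"
  define a b where "a = Re w" and "b = Im w"
  have ab: "a^2 + b^2 < 1" and d: "(1 - a)^2 + b^2 > 0" using ab_lem[OF w] by (simp_all add: a_def b_def)
  have "Re (1 / (1 - w)) = (1 - a) / ((1 - a)^2 + b^2)" by (simp add: Re_divide a_def b_def)
  moreover have "(1 - a) / ((1 - a)^2 + b^2) > 1/2"
    using d ab by (simp add: field_simps power2_eq_square)
  ultimately show ?thesis by simp
qed

lemma re_cayley: "cmod w < 1 \<Longrightarrow> Re ((1 + w) / (1 - w)) > 0"
proof -
  assume w: "cmod w < 1"
  define a b where "a = Re w" and "b = Im w"
  have ab: "a^2 + b^2 < 1" and d: "(1 - a)^2 + b^2 > 0" using ab_lem[OF w] by (simp_all add: a_def b_def)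
  have "Re ((1 + w) / (1 - w)) = ((1 + a) * (1 - a) + b * (- b)) / ((1 - a)^2 + b^2)" by (simp add: Re_divide a_def b_def)
  moreover have "((1 + a) * (1 - a) + b * (- b)) / ((1 - a)^2 + b^2) > 0"
    using d ab by (intro divide_pos_pos) (simp_all add: algebra_simps power2_eq_square)
  ultimately show ?thesis by simp
qed

definition gex :: "nat \<Rightarrow> real \<Rightarrow> complex \<Rightarrow> complex" where
  "gex n \<alpha> z = z * exp (- of_real (2 * (1 - \<alpha>) / real n) * Ln (1 - z^n))"

definition pex :: "nat \<Rightarrow> complex \<Rightarrow> complex" where
  "pex n z = (1 + z^n) / (1 - z^n)"

definition fex :: "nat \<Rightarrow> real \<Rightarrow> complex \<Rightarrow> complex" where
  "fex n \<alpha> z = gex n \<alpha> z * pex n z"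

lemma pow_ball: "w \<in> ball 0 1 \<Longrightarrow> cmod (w^n) < 1 \<or> n = 0"
  by (cases "n = 0") (auto simp: norm_power power_less_one_iff)

lemma ball_pow:
  assumes "w \<in> ball 0 1" "n \<ge> 1"
  shows "cmod (w^n) < 1" "1 - w^n \<notin> \<real>\<^sub>\<le>\<^sub>0" "1 - w^n \<noteq> 0" "1 + w^n \<noteq> 0"
proof -
  show wn: "cmod (w^n) < 1" using pow_ball[OF assms(1), of n] assms(2) by auto
  have "Re (w^n) < 1" using wn abs_Re_le_cmod[of "w^n"] by linarith
  then have "Re (1 - w^n) > 0" by simp
  then show "1 - w^n \<notin> \<real>\<^sub>\<le>\<^sub>0" by (auto simp: complex_nonpos_Reals_iff)
  show "1 - w^n \<noteq> 0" using wn by auto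
  show "1 + w^n \<noteq> 0"
  proof
    assume "1 + w^n = 0"
    then have "w^n = -1" by (simp add: add_eq_0_iff)
    with wn show False by simp
  qed
qed

lemma hol_gex: "n \<ge> 1 \<Longrightarrow> gex n \<alpha> holomorphic_on ball 0 1"
  unfolding gex_def[abs_def] using ball_pow by (intro holomorphic_intros) auto

lemma hol_pex: "n \<ge> 1 \<Longrightarrow> pex n holomorphic_on ball 0 1"
  unfolding pex_def[abs_def] using ball_pow by (intro holomorphic_intros) auto

lemma hol_fex: "n \<ge> 1 \<Longrightarrow> fex n \<alpha> holomorphic_on ball 0 1"
  unfolding fex_def[abs_def] using hol_gex hol_pex by (intro holomorphic_intros) auto

lemma sym_gex: "n \<ge> 1 \<Longrightarrow> gex n \<alpha> (rootu n * z) = rootu n ^ 1 * gex n \<alpha> z"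
  by (simp add: gex_def power_mult_distrib rootu_n)

lemma sym_pex: "n \<ge> 1 \<Longrightarrow> pex n (rootu n * z) = rootu n ^ 0 * pex n z"
  by (simp add: pex_def power_mult_distrib rootu_n)

lemma sym_fex: "n \<ge> 1 \<Longrightarrow> fex n \<alpha> (rootu n * z) = rootu n ^ 1 * fex n \<alpha> z"
  by (simp add: fex_def sym_gex sym_pex del: power_one_right)

lemma dE:
  assumes w: "w \<in> ball 0 1" and n: "n \<ge> 1"
  shows "((\<lambda>w. exp (- c * Ln (1 - w^n))) has_field_derivative
           exp (- c * Ln (1 - w^n)) * (- c * (inverse (1 - w^n) * (0 - of_nat n * (1 * w^(n - Suc 0)))))) (at w)"
proof -
  have dinner: "((\<lambda>w. 1 - w^n) has_field_derivative (0 - of_nat n * (1 * w^(n - Suc 0)))) (at w)"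
    by (rule DERIV_diff[OF DERIV_const DERIV_power[OF DERIV_ident]])
  have dL: "((\<lambda>w. Ln (1 - w^n)) has_field_derivative inverse (1 - w^n) * (0 - of_nat n * (1 * w^(n - Suc 0)))) (at w)"
    by (rule DERIV_chain2[OF has_field_derivative_Ln[OF ball_pow(2)[OF w n]] dinner])
  show ?thesis
    by (rule DERIV_chain2[OF DERIV_exp DERIV_cmult[OF dL]])
qed

lemma Qf_gex:
  assumes w: "w \<in> ball 0 1" and n: "n \<ge> 1"
  shows "Qf (gex n \<alpha>) w = 1 + of_real (2 * (1 - \<alpha>)) * (w^n / (1 - w^n))"
    and "deriv (gex n \<alpha>) w = exp (- complex_of_real (2 * (1 - \<alpha>) / real n) * Ln (1 - w^n)) * (1 + of_real (2 * (1 - \<alpha>)) * (w^n / (1 - w^n)))"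
proof -
  define c where "c = complex_of_real (2 * (1 - \<alpha>) / real n)"
  define E where "E w = exp (- c * Ln (1 - w^n))" for w
  define E' where "E' = E w * (- c * (inverse (1 - w^n) * (0 - of_nat n * (1 * w^(n - Suc 0)))))"
  have dE': "(E has_field_derivative E') (at w)" unfolding E_def[abs_def] E'_def by (rule dE[OF w n])
  have dg: "(gex n \<alpha> has_field_derivative 1 * E w + E' * w) (at w)"
  proof -
    have "gex n \<alpha> = (\<lambda>w. w * E w)" by (simp add: fun_eq_iff gex_def E_def c_def)
    then show ?thesis using DERIV_mult[OF DERIV_ident dE'] by simp
  qed
  have cn: "c * of_nat n = of_real (2 * (1 - \<alpha>))" using n by (simp add: c_def)
  have ww: "w * w^(n - Suc 0) = w^n" using n by (metis Suc_diff_1 less_eq_Suc_le power_Suc One_nat_def)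
  have nz: "1 - w^n \<noteq> 0" using ball_pow[OF w n] by simp
  have key: "1 * E w + E' * w = E w * (1 + of_real (2 * (1 - \<alpha>)) * (w^n / (1 - w^n)))"
  proof -
    have "E' * w = E w * (c * of_nat n * (w * w^(n - Suc 0)) / (1 - w^n))"
      unfolding E'_def using nz by (simp add: field_simps)
    then show ?thesis unfolding cn ww using nz by (simp add: field_simps)
  qed
  show "deriv (gex n \<alpha>) w = exp (- complex_of_real (2 * (1 - \<alpha>) / real n) * Ln (1 - w^n)) * (1 + of_real (2 * (1 - \<alpha>)) * (w^n / (1 - w^n)))"
    using DERIV_imp_deriv[OF dg] key by (simp add: E_def c_def)
  show "Qf (gex n \<alpha>) w = 1 + of_real (2 * (1 - \<alpha>)) * (w^n / (1 - w^n))"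
  proof (cases "w = 0")
    case True then show ?thesis using n by (simp add: Qf_def power_0_left)
  next
    case False
    have "Qf (gex n \<alpha>) w = w * (E w * (1 + of_real (2 * (1 - \<alpha>)) * (w^n / (1 - w^n)))) / (w * E w)"
      using False DERIV_imp_deriv[OF dg] key by (simp add: Qf_def gex_def E_def c_def)
    also have "\<dots> = 1 + of_real (2 * (1 - \<alpha>)) * (w^n / (1 - w^n))"
      using False by (simp add: E_def)
    finally show ?thesis .
  qed
qed

lemma frac_cancel2: "(a::complex) \<noteq> 0 \<Longrightarrow> b \<noteq> 0 \<Longrightarrow> c / (a * a) / (b / a) = c / (a * b)"
  by (simp add: field_simps)

lemma deriv_pex:
  assumes w: "w \<in> ball 0 1" and n: "n \<ge> 1"
  shows "w * deriv (pex n) w / pex n w = of_nat (2 * n) * w^n / ((1 - w^n) * (1 + w^n))"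
proof -
  have d1: "((\<lambda>w. 1 + w^n) has_field_derivative 0 + of_nat n * (1 * w^(n - Suc 0))) (at w)"
    by (rule DERIV_add[OF DERIV_const DERIV_power[OF DERIV_ident]])
  have d2: "((\<lambda>w. 1 - w^n) has_field_derivative 0 - of_nat n * (1 * w^(n - Suc 0))) (at w)"
    by (rule DERIV_diff[OF DERIV_const DERIV_power[OF DERIV_ident]])
  have nz: "1 - w^n \<noteq> 0" "1 + w^n \<noteq> 0" using ball_pow[OF w n] by auto
  have "(pex n has_field_derivative ((0 + of_nat n * (1 * w^(n - Suc 0))) * (1 - w^n) - (1 + w^n) * (0 - of_nat n * (1 * w^(n - Suc 0)))) / ((1 - w^n) * (1 - w^n))) (at w)"
    unfolding pex_def[abs_def] by (rule DERIV_divide[OF d1 d2 nz(1)])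
  then have dp: "deriv (pex n) w = 2 * of_nat n * w^(n - Suc 0) / ((1 - w^n) * (1 - w^n))"
    by (simp add: DERIV_imp_deriv algebra_simps)
  have ww: "w * w^(n - Suc 0) = w^n" using n by (metis Suc_diff_1 less_eq_Suc_le power_Suc One_nat_def)
  have "w * deriv (pex n) w / pex n w = 2 * of_nat n * (w * w^(n - Suc 0)) / ((1 - w^n) * (1 - w^n)) / ((1 + w^n) / (1 - w^n))"
    unfolding dp pex_def by (simp add: mult_ac)
  also have "\<dots> = 2 * of_nat n * w^n / ((1 - w^n) * (1 + w^n))"
    unfolding ww using nz by (rule frac_cancel2)
  finally show ?thesis by simp
qed

lemma Qf_prod:
  assumes holg: "g holomorphic_on ball 0 1" and holp: "p holomorphic_on ball 0 1"
    and w: "w \<in> ball 0 1" "w \<noteq> 0" and nz: "g w \<noteq> 0" "p w \<noteq> 0"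
  shows "Qf (\<lambda>z. g z * p z) w = Qf g w + w * deriv p w / p w"
proof -
  have df: "deriv (\<lambda>z. g z * p z) w = deriv g w * p w + deriv p w * g w"
    by (rule DERIV_imp_deriv[OF DERIV_mult[OF hol_diff_at[OF holg w(1)] hol_diff_at[OF holp w(1)]]])
  have "Qf (\<lambda>z. g z * p z) w = w * (deriv g w * p w + deriv p w * g w) / (g w * p w)"
    using w df by (simp add: Qf_def)
  also have "\<dots> = w * deriv g w / g w + w * deriv p w / p w"
    using nz by (simp add: field_simps)
  finally show ?thesis using w by (simp add: Qf_def)
qed

lemma gex0: "gex n \<alpha> 0 = 0" by (simp add: gex_def)
lemma pex0: "n \<ge> 1 \<Longrightarrow> pex n 0 = 1" by (simp add: pex_def power_0_left)

lemma dgex0: "n \<ge> 1 \<Longrightarrow> deriv (gex n \<alpha>) 0 = 1"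
  using Qf_gex(2)[of 0 n \<alpha>] by (simp add: power_0_left)

lemma gex_nz: "w \<noteq> 0 \<Longrightarrow> gex n \<alpha> w \<noteq> 0" by (simp add: gex_def)

lemma gex_A: assumes n: "n \<ge> 1" shows "gex n \<alpha> \<in> A_cls n"
  unfolding A_cls_def
proof (intro CollectI conjI allI impI)
  show "gex n \<alpha> holomorphic_on ball 0 1" by (rule hol_gex[OF n])
  show "gex n \<alpha> 0 = 0" by (rule gex0)
  show "deriv (gex n \<alpha>) 0 = 1" by (rule dgex0[OF n])
  fix k assume k: "2 \<le> k \<and> k \<le> n"
  show "(deriv ^^ k) (gex n \<alpha>) 0 = 0"
    by (rule sym_deriv[OF hol_gex[OF n] rootu_norm sym_gex[OF n] rootu_ne]) (use k in auto)
qed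

lemma fex_A: assumes n: "n \<ge> 1" shows "fex n \<alpha> \<in> A_cls n"
  unfolding A_cls_def
proof (intro CollectI conjI allI impI)
  show "fex n \<alpha> holomorphic_on ball 0 1" by (rule hol_fex[OF n])
  show "fex n \<alpha> 0 = 0" by (simp add: fex_def gex0)
  have "deriv (\<lambda>z. gex n \<alpha> z * pex n z) 0 = deriv (gex n \<alpha>) 0 * pex n 0 + deriv (pex n) 0 * gex n \<alpha> 0"
    by (rule DERIV_imp_deriv[OF DERIV_mult[OF hol_diff_at[OF hol_gex[OF n]] hol_diff_at[OF hol_pex[OF n]]]]) auto
  then show "deriv (fex n \<alpha>) 0 = 1"
    using dgex0[OF n] pex0[OF n] gex0 by (simp add: fex_def[abs_def])
  fix k assume k: "2 \<le> k \<and> k \<le> n"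
  show "(deriv ^^ k) (fex n \<alpha>) 0 = 0"
    by (rule sym_deriv[OF hol_fex[OF n] rootu_norm sym_fex[OF n] rootu_ne]) (use k in auto)
qed

lemma gex_S: assumes n: "n \<ge> 1" and a: "\<alpha> < 1" shows "gex n \<alpha> \<in> Sstar_cls n \<alpha>"
  unfolding Sstar_cls_def
proof (intro CollectI conjI ballI impI)
  show "gex n \<alpha> \<in> A_cls n" by (rule gex_A[OF n])
  fix z :: complex assume z: "z \<in> ball 0 1"
  show "z \<noteq> 0 \<Longrightarrow> gex n \<alpha> z \<noteq> 0" by (rule gex_nz)
  have wn: "cmod (z^n) < 1" using ball_pow[OF z n] by simp
  have nz: "1 - z^n \<noteq> 0" using ball_pow[OF z n] by simp
  have "z^n / (1 - z^n) = 1 / (1 - z^n) - 1" using nz by (simp add: field_simps)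
  then have "Re (Qf (gex n \<alpha>) z) = 1 + 2 * (1 - \<alpha>) * (Re (1 / (1 - z^n)) - 1)"
    using Qf_gex(1)[OF z n] by simp
  moreover have "Re (1 / (1 - z^n)) > 1/2" by (rule re_inv_half[OF wn])
  moreover have "2 * (1 - \<alpha>) * (Re (1 / (1 - z^n)) - 1) > 2 * (1 - \<alpha>) * (- 1/2)"
    by (rule mult_strict_left_mono) (use a \<open>Re (1 / (1 - z^n)) > 1/2\<close> in auto)
  moreover have "2 * (1 - \<alpha>) * (- 1/2) = \<alpha> - 1" by (simp add: algebra_simps)
  ultimately show "Re (Qf (gex n \<alpha>) z) > \<alpha>" by linarith
qed

lemma fex_CS: assumes n: "n \<ge> 1" and a: "\<alpha> < 1" shows "fex n \<alpha> \<in> CSstar_cls n \<alpha>"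
  unfolding CSstar_cls_def
proof (intro CollectI conjI bexI)
  show "fex n \<alpha> \<in> A_cls n" by (rule fex_A[OF n])
  show "gex n \<alpha> \<in> Sstar_cls n \<alpha>" by (rule gex_S[OF n a])
  define qq where "qq = (\<lambda>z. if z = 0 then 1 else fex n \<alpha> z / gex n \<alpha> z)"
  have qp: "qq z = pex n z" if "z \<in> ball 0 1" for z
    using gex_nz[of z n \<alpha>] pex0[OF n] by (simp add: qq_def fex_def)
  have "qq \<in> P_cls n"
    unfolding P_cls_def
  proof (intro CollectI conjI allI impI ballI)
    show "qq holomorphic_on ball 0 1"
      by (rule holomorphic_transform[OF hol_pex[OF n]]) (use qp in auto)
    show "qq 0 = 1" by (simp add: qq_def)
    fix k :: nat assume k: "1 \<le> k \<and> k < n"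
    have "(deriv ^^ k) qq 0 = (deriv ^^ k) (pex n) 0"
      by (rule higher_deriv_cong_ev[OF ev_ball[OF _ qp] refl]) simp
    also have "\<dots> = 0"
      by (rule sym_deriv[OF hol_pex[OF n] rootu_norm sym_pex[OF n] rootu_ne]) (use k in auto)
    finally show "(deriv ^^ k) qq 0 = 0" .
  next
    fix z :: complex assume z: "z \<in> ball 0 1"
    show "Re (qq z) > 0" using qp[OF z] re_cayley[OF ball_pow(1)[OF z n]] by (simp add: pex_def)
  qed
  then show "(\<lambda>z. if z = 0 then 1 else fex n \<alpha> z / gex n \<alpha> z) \<in> P_cls n" by (simp add: qq_def)
qed

lemma Qf_fex_real:
  assumes n: "n \<ge> 1" and t: "0 < t" "t < 1"
  shows "Qf (fex n \<alpha>) (of_real t) = of_real (1 + 2 * (1 - \<alpha>) * (t^n / (1 - t^n)) + real (2 * n) * t^n / ((1 - t^n) * (1 + t^n)))"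
proof -
  have w: "complex_of_real t \<in> ball 0 1" "complex_of_real t \<noteq> 0" using t by auto
  have "Qf (fex n \<alpha>) (of_real t) = Qf (\<lambda>z. gex n \<alpha> z * pex n z) (of_real t)"
    by (simp add: fex_def[abs_def])
  also have "\<dots> = Qf (gex n \<alpha>) (of_real t) + of_real t * deriv (pex n) (of_real t) / pex n (of_real t)"
  proof (rule Qf_prod[OF hol_gex[OF n] hol_pex[OF n] w])
    show "gex n \<alpha> (complex_of_real t) \<noteq> 0" using gex_nz w by blast
    show "pex n (complex_of_real t) \<noteq> 0" using ball_pow[OF w(1) n] by (simp add: pex_def)
  qed
  also have "\<dots> = 1 + of_real (2 * (1 - \<alpha>)) * ((of_real t)^n / (1 - (of_real t)^n)) + of_nat (2 * n) * (of_real t)^n / ((1 - (of_real t)^n) * (1 + (of_real t)^n))"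
    by (simp add: Qf_gex(1)[OF w(1) n] deriv_pex[OF w(1) n])
  also have "\<dots> = of_real (1 + 2 * (1 - \<alpha>) * (t^n / (1 - t^n)) + real (2 * n) * t^n / ((1 - t^n) * (1 + t^n)))"
    by simp
  finally show ?thesis .
qed

lemma gen3: "(D::real) \<noteq> 0 \<Longrightarrow> A * (2 / D)^2 + B * (2 / D) - 1 = (4 * A + 2 * B * D - D^2) / D^2"
  by (simp add: field_simps power2_eq_square)

lemma x0_facts:
  fixes n :: nat and \<alpha> :: real
  assumes n: "n \<ge> 1" and a: "\<alpha> < 1"
  defines "x0 \<equiv> 2 / (3 * (1 + real n - \<alpha>) + sqrt (9 * (1 + real n - \<alpha>)\<^sup>2 + 4 * (4 - 3 * \<alpha>)))"
  shows "0 < x0" "x0 < 1" "(4 - 3*\<alpha>) * x0^2 + 3 * (1 + real n - \<alpha>) * x0 - 1 = 0"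
proof -
  define B where "B = 3 * (1 + real n - \<alpha>)"
  define A where "A = 4 - 3 * \<alpha>"
  define S where "S = sqrt (9 * (1 + real n - \<alpha>)\<^sup>2 + 4 * (4 - 3 * \<alpha>))"
  have B3: "B > 3" using n a by (simp add: B_def)
  have A1: "A > 1" using a by (simp add: A_def)
  have arg0: "0 \<le> 9 * (1 + real n - \<alpha>)\<^sup>2 + 4 * (4 - 3 * \<alpha>)"
  proof -
    have "0 \<le> 9 * (1 + real n - \<alpha>)\<^sup>2" by simp
    moreover have "0 \<le> 4 * (4 - 3 * \<alpha>)" using a by simp
    ultimately show ?thesis by linarith
  qed
  have S0: "S \<ge> 0" unfolding S_def using arg0 by simp
  have S2: "S^2 = B^2 + 4 * A"
  proof -
    have "0 \<le> 9 * (1 + real n - \<alpha>)\<^sup>2" by simp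
    moreover have "0 \<le> 4 * (4 - 3 * \<alpha>)" using a by simp
    ultimately have "0 \<le> 9 * (1 + real n - \<alpha>)\<^sup>2 + 4 * (4 - 3 * \<alpha>)" by linarith
    then have "S^2 = 9 * (1 + real n - \<alpha>)\<^sup>2 + 4 * (4 - 3 * \<alpha>)" by (simp add: S_def)
    moreover have "B^2 = 9 * (1 + real n - \<alpha>)\<^sup>2" unfolding B_def by (simp add: power2_eq_square algebra_simps)
    ultimately show ?thesis by (simp add: A_def)
  qed
  have x0e: "x0 = 2 / (B + S)" by (simp add: x0_def B_def S_def)
  have D: "B + S > 2" using B3 S0 by simp
  show "0 < x0" using D x0e by simp
  show "x0 < 1" using D x0e by simp
  have "A * x0^2 + B * x0 - 1 = (4 * A + 2 * B * (B + S) - (B + S)^2) / (B + S)^2"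
    unfolding x0e using gen3[of "B + S" A B] D by simp
  also have "4 * A + 2 * B * (B + S) - (B + S)^2 = 0"
    using S2 by (simp add: power2_eq_square algebra_simps)
  finally show "(4 - 3*\<alpha>) * x0^2 + 3 * (1 + real n - \<alpha>) * x0 - 1 = 0" by (simp add: A_def B_def)
qed

lemma Q_diff:
  fixes A B x y :: real
  shows "(A * x^2 + B * x - 1) - (A * y^2 + B * y - 1) = (x - y) * (A * (x + y) + B)"
  by (simp add: power2_eq_square algebra_simps)

lemma gen1: "(a::real) \<noteq> 0 \<Longrightarrow> b \<noteq> 0 \<Longrightarrow> (C * (x / a) + m * x / (a * b)) * (3 * (a * b)) = 3 * C * x * b + 3 * m * x"
  by (simp add: field_simps)

lemma gen2: "(a::real) \<noteq> 0 \<Longrightarrow> b \<noteq> 0 \<Longrightarrow> (2/3 + 2 * Q / (3 * (a * b))) * (3 * (a * b)) = 2 * (a * b) + 2 * Q"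
  by (simp add: field_simps)

lemma sum_identity:
  fixes x \<alpha> :: real and n :: nat
  assumes "0 \<le> x" "x < 1"
  shows "2 * (1 - \<alpha>) * (x / (1 - x)) + real (2 * n) * x / ((1 - x) * (1 + x))
         = 2/3 + 2 * ((4 - 3*\<alpha>) * x^2 + 3 * (1 + real n - \<alpha>) * x - 1) / (3 * ((1 - x) * (1 + x)))"
proof -
  have h: "1 - x \<noteq> 0" "1 + x \<noteq> 0" using assms by auto
  have "(2 * (1 - \<alpha>) * (x / (1 - x)) + real (2 * n) * x / ((1 - x) * (1 + x))) * (3 * ((1 - x) * (1 + x)))
      = 6 * (1 - \<alpha>) * x * (1 + x) + 6 * real n * x"
    using gen1[of "1 - x" "1 + x" "2 * (1 - \<alpha>)" x "real (2 * n)"] h by simp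
  moreover have "(2/3 + 2 * ((4 - 3*\<alpha>) * x^2 + 3 * (1 + real n - \<alpha>) * x - 1) / (3 * ((1 - x) * (1 + x)))) * (3 * ((1 - x) * (1 + x)))
      = 2 * ((1 - x) * (1 + x)) + 2 * ((4 - 3*\<alpha>) * x^2 + 3 * (1 + real n - \<alpha>) * x - 1)"
    by (rule gen2[OF h])
  moreover have "6 * (1 - \<alpha>) * x * (1 + x) + 6 * real n * x = 2 * ((1 - x) * (1 + x)) + 2 * ((4 - 3*\<alpha>) * x^2 + 3 * (1 + real n - \<alpha>) * x - 1)"
    by (simp add: algebra_simps power2_eq_square)
  moreover have "3 * ((1 - x) * (1 + x)) \<noteq> 0" using h by simp
  ultimately show ?thesis by (metis mult_right_cancel)
qed

theorem mainTheorem10: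
  fixes n :: nat and \<alpha> :: real
  assumes "n \<ge> 1" and "0 \<le> \<alpha>" and "\<alpha> < 1"
  shows "radius_Ne (CSstar_cls n \<alpha>) =
           (2 / (3 * (1 + real n - \<alpha>) + sqrt (9 * (1 + real n - \<alpha>)\<^sup>2 + 4 * (4 - 3 * \<alpha>))))
             powr (1 / real n)
       \<and> (\<forall>\<rho>. (2 / (3 * (1 + real n - \<alpha>) + sqrt (9 * (1 + real n - \<alpha>)\<^sup>2 + 4 * (4 - 3 * \<alpha>))))
               powr (1 / real n) < \<rho> \<and> \<rho> \<le> 1 \<longrightarrow>
             (\<exists>f\<in>CSstar_cls n \<alpha>. \<not> Qf f ` ball 0 \<rho> \<subseteq> Omega_Ne))"
proof -
  note n = assms(1) and a = assms(3)
  define x0 where "x0 = 2 / (3 * (1 + real n - \<alpha>) + sqrt (9 * (1 + real n - \<alpha>)\<^sup>2 + 4 * (4 - 3 * \<alpha>)))"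
  define r0 where "r0 = x0 powr (1 / real n)"
  define Q where "Q x = (4 - 3*\<alpha>) * x^2 + 3 * (1 + real n - \<alpha>) * x - 1" for x :: real
  have x0p: "0 < x0" "x0 < 1" and Qx0: "Q x0 = 0"
    using x0_facts[OF n a] by (simp_all add: x0_def Q_def)
  have Qd: "Q x - Q x0 = (x - x0) * ((4 - 3*\<alpha>) * (x + x0) + 3 * (1 + real n - \<alpha>))" for x
    unfolding Q_def by (rule Q_diff)
  have r0p: "0 < r0" using x0p by (simp add: r0_def)
  have r0n: "r0 ^ n = x0"
  proof -
    have "r0 ^ n = r0 powr real n" using r0p by (simp add: powr_realpow)
    also have "\<dots> = x0 powr (1 / real n * real n)" by (simp add: r0_def powr_powr)
    also have "\<dots> = x0" using n x0p by simp
    finally show ?thesis .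
  qed
  have r01: "r0 < 1"
  proof (rule ccontr)
    assume "\<not> r0 < 1"
    then have "1 \<le> r0 ^ n" by (simp add: one_le_power)
    then show False using r0n x0p by simp
  qed
  have coefpos: "(4 - 3*\<alpha>) * (x + x0) + 3 * (1 + real n - \<alpha>) > 0" if "0 \<le> x" for x
  proof -
    have "(4 - 3*\<alpha>) * (x + x0) \<ge> 0" using a that x0p by (intro mult_nonneg_nonneg) auto
    moreover have "3 * (1 + real n - \<alpha>) > 0" using a by simp
    ultimately show ?thesis by linarith
  qed
  have good: "Qf f ` ball 0 r0 \<subseteq> Omega_Ne" if f: "f \<in> CSstar_cls n \<alpha>" for f
  proof
    fix y assume "y \<in> Qf f ` ball 0 r0"
    then obtain z where z: "cmod z < r0" "y = Qf f z" by auto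
    have zb: "z \<in> ball 0 1" using z r01 by simp
    define s where "s = cmod z ^ n"
    have s0: "0 \<le> s" by (simp add: s_def)
    have sx0: "s < x0" unfolding s_def r0n[symmetric] using z(1) n by (intro power_strict_mono) auto
    have s1: "s < 1" using sx0 x0p by simp
    have Qs: "Q s < 0"
    proof -
      have "Q s - Q x0 < 0" unfolding Qd using sx0 coefpos[OF s0] by (simp add: mult_neg_pos)
      then show ?thesis using Qx0 by simp
    qed
    have z2n: "cmod z ^ (2 * n) = s^2" unfolding s_def by (metis power_mult mult.commute)
    have z2n': "1 - cmod z ^ (2 * n) = (1 - s) * (1 + s)"
      unfolding z2n by (simp add: algebra_simps power2_eq_square)
    have bnd: "cmod (Qf f z - 1) \<le> 2 * (1 - \<alpha>) * (s / (1 - s)) + real (2 * n) * s / ((1 - s) * (1 + s))"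
      using Qf_bound[OF n a f zb] unfolding z2n' by (simp add: s_def)
    also have "\<dots> = 2/3 + 2 * Q s / (3 * ((1 - s) * (1 + s)))"
      using sum_identity[OF s0 s1, of \<alpha> n] by (simp add: Q_def)
    also have "\<dots> < 2/3"
    proof -
      have "(1 - s) * (1 + s) > 0" using s0 s1 by simp
      then have "2 * Q s / (3 * ((1 - s) * (1 + s))) < 0" using Qs by (simp add: divide_neg_pos)
      then show ?thesis by linarith
    qed
    finally have "cmod (Qf f z - 1) < 2/3" .
    then show "y \<in> Omega_Ne" using z(2) disk_in_Omega by simp
  qed
  have sharp: "\<exists>f\<in>CSstar_cls n \<alpha>. \<not> Qf f ` ball 0 \<rho> \<subseteq> Omega_Ne" if \<rho>: "r0 < \<rho>" "\<rho> \<le> 1" for \<rho>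
  proof
    show "fex n \<alpha> \<in> CSstar_cls n \<alpha>" by (rule fex_CS[OF n a])
    define t where "t = (r0 + \<rho>) / 2"
    have t: "r0 < t" "t < \<rho>" "0 < t" "t < 1" using \<rho> r0p by (auto simp: t_def)
    define x where "x = t ^ n"
    have x0x: "x0 < x" unfolding x_def r0n[symmetric] using t n r0p by (intro power_strict_mono) auto
    have x1: "x < 1" "0 \<le> x" using t n by (auto simp: x_def power_less_one_iff)
    have Qx: "Q x > 0"
    proof -
      have "Q x - Q x0 > 0" unfolding Qd using x0x coefpos[OF x1(2)] by simp
      then show ?thesis using Qx0 by simp
    qed
    define V where "V = 1 + 2 * (1 - \<alpha>) * (x / (1 - x)) + real (2 * n) * x / ((1 - x) * (1 + x))"
    have QV: "Qf (fex n \<alpha>) (of_real t) = of_real V"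
      using Qf_fex_real[OF n t(3) t(4), of \<alpha>] by (simp add: V_def x_def)
    have V53: "V > 5/3"
    proof -
      have "(1 - x) * (1 + x) > 0" using x1 by simp
      then have "2 * Q x / (3 * ((1 - x) * (1 + x))) > 0" using Qx by simp
      moreover have "V = 1 + (2/3 + 2 * Q x / (3 * ((1 - x) * (1 + x))))"
        using sum_identity[OF x1(2) x1(1), of \<alpha> n] by (simp add: V_def Q_def add.assoc)
      ultimately show ?thesis by simp
    qed
    show "\<not> Qf (fex n \<alpha>) ` ball 0 \<rho> \<subseteq> Omega_Ne"
    proof
      assume sub: "Qf (fex n \<alpha>) ` ball 0 \<rho> \<subseteq> Omega_Ne"
      have "complex_of_real t \<in> ball 0 \<rho>" using t by simp
      then have "complex_of_real V \<in> Omega_Ne" using sub QV by (metis image_eqI subsetD)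
      then have "Re (complex_of_real V) < 5/3" by (rule real_Omega) simp
      then show False using V53 by simp
    qed
  qed
  have rad: "radius_Ne (CSstar_cls n \<alpha>) = r0"
    unfolding radius_Ne_def
  proof (rule Greatest_equality)
    show "0 < r0 \<and> r0 \<le> 1 \<and> (\<forall>f\<in>CSstar_cls n \<alpha>. Qf f ` ball 0 r0 \<subseteq> Omega_Ne)"
      using r0p r01 good by auto
    fix y assume y: "0 < y \<and> y \<le> 1 \<and> (\<forall>f\<in>CSstar_cls n \<alpha>. Qf f ` ball 0 y \<subseteq> Omega_Ne)"
    show "y \<le> r0"
    proof (rule ccontr)
      assume "\<not> y \<le> r0"
      then obtain f where "f \<in> CSstar_cls n \<alpha>" "\<not> Qf f ` ball 0 y \<subseteq> Omega_Ne" using sharp[of y] y by auto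
      then show False using y by blast
    qed
  qed
  show ?thesis
    unfolding x0_def[symmetric] r0_def[symmetric] using rad sharp by blast
qed

end
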